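(* Let $n$ be a nonnegative integer and let $q$, $a$, $z$ be indeterminates (equivalently, generic complex numbers such that no denominator below vanishes). Then \[ \frac{(q^{z-n+\frac{3}{2}};q)_n\,(aq^{z-\frac{1}{2}};q)_n} {(q^{z-2n+2};q)_n\,(aq^{z+n-1};q)_n} =\sum_{k=0}^n \frac{(q^{-n};q)_k\,(q^{-n+\frac{1}{2}};q)_k\,(q^{\frac{5}{2}-2n}/a;q)_k} {(q;q)_k\,(q^{z-2n+2};q)_k\,(q^{2-2n-z}/a;q)_k}\,q^k . \]
   Context: For a variable $u$ and a nonnegative integer $n$, the $q$-shifted factorial is $(u;q)_0=1$ and $(u;q)_n=(1-u)(1-uq)\cdots(1-uq^{n-1})$. Powers such as $q^{z}$ and $q^{1/2}$ are understood formally (i.e., $q^{z}$ and $q^{1/2}$ are treated as variables). *)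

theory Defs
  imports Complex_Main
begin

definition qpoch :: "complex \<Rightarrow> complex \<Rightarrow> nat \<Rightarrow> complex" where
  "qpoch u q n = (\<Prod>i<n. (1 - u * q ^ i))"

end

theory Submission
  imports Defs
begin

lemma qpoch_0[simp]: "qpoch u q 0 = 1" by (simp add: qpoch_def)
lemma qpoch_Suc: "qpoch u q (Suc k) = qpoch u q k * (1 - u*q^k)"
  by (simp add: qpoch_def)
lemma qpoch_shift: "v = u*q \<Longrightarrow> qpoch u q (Suc k) = (1 - u) * qpoch v q k"
proof (induction k)
  case 0 then show ?case by (simp add: qpoch_def)
next
  case (Suc k)
  have "qpoch u q (Suc (Suc k)) = qpoch u q (Suc k) * (1 - u*q^Suc k)" by (rule qpoch_Suc)
  also have "... = (1-u) * (qpoch v q k * (1 - v*q^k))" using Suc by (simp add: mult.assoc)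
  also have "... = (1-u) * qpoch v q (Suc k)" by (simp add: qpoch_Suc)
  finally show ?case .
qed
lemma qpoch_nz_iff: "qpoch u q m \<noteq> 0 \<longleftrightarrow> (\<forall>i<m. 1 - u*q^i \<noteq> 0)"
  by (auto simp: qpoch_def)
lemma qpoch_nz_mono: "qpoch u q m \<noteq> 0 \<Longrightarrow> k \<le> m \<Longrightarrow> qpoch u q k \<noteq> 0"
  by (auto simp: qpoch_nz_iff)

lemma core_gen:
  fixes q A B C N x d1 d2 :: complex
  assumes nz: "q \<noteq> 0" "A \<noteq> 0" "B \<noteq> 0" "C \<noteq> 0" "N \<noteq> 0" "d1 \<noteq> 0" "d2 \<noteq> 0"
    and d1: "d1 = 1 - C*N" and d2: "d2 = A*B - C*N"
  shows "(1-1/(N*q))*(1-A)*(1-B)*x*(1-x*(A*B/C)/N)/(-d2/(C*N))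
      = ((A-C*N)*(B-C*N)/(d1*d2))*((1-x/(q*N))*(1-A)*(1-B)*x) + ((d1*d2-(A-C*N)*(B-C*N))/(d1*d2))*((1-x/(q*N))*(1-A*x)*(1-B*x)-(1-x)*(1-C*x/q)*(1-x*(A*B/C)/N))"
proof -
  have P: "-C*(N*q-1)*(1-A)*(1-B)*x*(C*N-x*A*B)*d1 = C*(A-C*N)*(B-C*N)*(q*N-x)*(1-A)*(1-B)*x+(d1*d2-(A-C*N)*(B-C*N))*(C*(q*N-x)*(1-A*x)*(1-B*x)-(1-x)*(q-C*x)*(C*N-x*A*B))"
    unfolding d1 d2 by algebra
  show ?thesis using nz apply (simp add: field_simps)
    using P d2 by algebra
qed

lemma core:
  fixes q A B C N x :: complex
  assumes "q \<noteq> 0" "A \<noteq> 0" "B \<noteq> 0" "C \<noteq> 0" "N \<noteq> 0"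
    "1 - A*B/(C*N) \<noteq> 0" "1 - C*N \<noteq> 0" "1 - C*N/(A*B) \<noteq> 0"
  shows "(1-1/(N*q))*(1-A)*(1-B)*x*(1-x*(A*B/C)/N)/(1-A*B/(C*N))
      = ((1 - C*N/A)*(1 - C*N/B)/((1 - C*N)*(1 - C*N/(A*B))))*((1-x/(q*N))*(1-A)*(1-B)*x) + (1-((1 - C*N/A)*(1 - C*N/B)/((1 - C*N)*(1 - C*N/(A*B)))))*((1-x/(q*N))*(1-A*x)*(1-B*x)-(1-x)*(1-C*x/q)*(1-x*(A*B/C)/N))"
proof -
  define d1 where "d1 = 1 - C*N"
  define d2 where "d2 = A*B - C*N"
  have h1: "d2 \<noteq> 0"
  proof
    assume "d2 = 0" then have "C*N/(A*B) = 1" using assms unfolding d2_def by simp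
    then show False using assms(8) by simp
  qed
  have h2: "d1 \<noteq> 0" using assms(7) d1_def by simp
  have e1: "1 - A*B/(C*N) = -d2/(C*N)" using assms unfolding d2_def by (simp add: field_simps)
  have a: "1 - C*N/A = (A - C*N)/A" using assms by (simp add: field_simps)
  have b: "1 - C*N/B = (B - C*N)/B" using assms by (simp add: field_simps)
  have c: "1 - C*N/(A*B) = d2/(A*B)" using assms unfolding d2_def by (simp add: field_simps)
  have g: "\<And>u v d w::complex. (u/A)*(v/B)/(d*(w/(A*B))) = u*v/(d*w)" using assms by (simp add: field_simps)
  have e2: "(1 - C*N/A)*(1 - C*N/B)/((1 - C*N)*(1 - C*N/(A*B))) = (A-C*N)*(B-C*N)/(d1*d2)"
    unfolding a b c g d1_def ..
  have e3: "1 - (A-C*N)*(B-C*N)/(d1*d2) = (d1*d2-(A-C*N)*(B-C*N))/(d1*d2)"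
    using h1 h2 by (simp add: field_simps)
  show ?thesis unfolding e1 e2 e3 
    by (rule core_gen[OF assms(1-5) h2 h1 d1_def d2_def])
qed

definition Tm :: "complex \<Rightarrow> complex \<Rightarrow> complex \<Rightarrow> complex \<Rightarrow> nat \<Rightarrow> nat \<Rightarrow> complex" where
  "Tm q A B C n k = qpoch (1/q^n) q k * qpoch A q k * qpoch B q k * q^k
     / (qpoch q q k * qpoch C q k * qpoch (q*A*B/(C*q^n)) q k)"
definition Um :: "complex \<Rightarrow> complex \<Rightarrow> complex \<Rightarrow> complex \<Rightarrow> nat \<Rightarrow> nat \<Rightarrow> complex" where
  "Um q A B C n k = qpoch (1/q^n) q k * qpoch (A*q) q k * qpoch (B*q) q k
     / (qpoch q q k * qpoch C q k * qpoch (q*A*B/(C*q^n)) q k)"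
definition rho :: "complex \<Rightarrow> complex \<Rightarrow> complex \<Rightarrow> complex \<Rightarrow> nat \<Rightarrow> complex" where
  "rho q A B C n = (1 - C*q^n/A)*(1 - C*q^n/B)/((1 - C*q^n)*(1 - C*q^n/(A*B)))"

lemma step_gen:
  fixes q A B C :: complex and n j :: nat
  assumes nz: "q \<noteq> 0" "A \<noteq> 0" "B \<noteq> 0" "C \<noteq> 0" and jn: "j < n"
    and hq: "qpoch q q (Suc n) \<noteq> 0" and hC: "qpoch C q (Suc n) \<noteq> 0"
    and hD: "qpoch (q*A*B/(C*q^Suc n)) q (Suc n) \<noteq> 0"
    and hE: "qpoch (C/(A*B)) q (Suc n) \<noteq> 0"
  shows "Tm q A B C (Suc n) (Suc j) = rho q A B C n * Tm q A B C n (Suc j)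
           + (1 - rho q A B C n) * (Um q A B C n (Suc j) - Um q A B C n j)"
proof -
  define N where "N = q^n"
  define x where "x = q^Suc j"
  have N0: "N \<noteq> 0" using nz unfolding N_def by simp
  have x0: "x \<noteq> 0" using nz unfolding x_def by simp
  define P1 where "P1 = qpoch (1/q^n) q j"
  define PA where "PA = qpoch (A*q) q j"
  define PB where "PB = qpoch (B*q) q j"
  define Pq where "Pq = qpoch q q j"
  define PC where "PC = qpoch C q j"
  define PD where "PD = qpoch (q*A*B/(C*q^n)) q j"
  define X1 where "X1 = 1 - x"
  define X2 where "X2 = 1 - C*x/q"
  define X3 where "X3 = 1 - x*(A*B/C)/N"
  define Y where "Y = 1 - A*B/(C*N)"
  define Z where "Z = 1 - x/(q*N)"
  have uD: "q*A*B/(C*q^Suc n) = A*B/(C*N)" using nz unfolding N_def by (simp add: field_simps)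
  have uD2: "q*A*B/(C*q^n) = A*B/(C*N) * q" using nz unfolding N_def by (simp add: field_simps)
  have hD2: "qpoch (q*A*B/(C*q^Suc n)) q (Suc n) = Y * qpoch (q*A*B/(C*q^n)) q n"
    unfolding uD Y_def by (rule qpoch_shift[OF uD2])
  have Y0: "Y \<noteq> 0" and hD': "qpoch (q*A*B/(C*q^n)) q n \<noteq> 0" using hD unfolding hD2 by auto
  have Pq0: "Pq \<noteq> 0" unfolding Pq_def using qpoch_nz_mono[OF hq] jn by simp
  have PC0: "PC \<noteq> 0" unfolding PC_def using qpoch_nz_mono[OF hC] jn by simp
  have PD0: "PD \<noteq> 0" unfolding PD_def using qpoch_nz_mono[OF hD'] jn by simp
  have X10: "X1 \<noteq> 0" using hq jn unfolding qpoch_nz_iff X1_def x_def by auto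
  have X20: "X2 \<noteq> 0" using hC jn nz unfolding qpoch_nz_iff X2_def x_def by auto
  have X30: "X3 \<noteq> 0"
  proof -
    have "1 - q*A*B/(C*q^n) * q^j \<noteq> 0" using hD' jn unfolding qpoch_nz_iff by auto
    moreover have "q*A*B/(C*q^n) * q^j = x*(A*B/C)/N" unfolding x_def N_def by (simp add: field_simps)
    ultimately show ?thesis unfolding X3_def by metis
  qed
  have c1: "1 - C*N \<noteq> 0" using hC unfolding qpoch_nz_iff N_def by (auto simp: mult.commute)
  have c2: "1 - C*N/(A*B) \<noteq> 0" using hE unfolding qpoch_nz_iff N_def by auto
  have r1: "qpoch (1/q^Suc n) q (Suc j) = (1 - 1/(N*q)) * P1"
  proof -
    have "qpoch (1/q^Suc n) q (Suc j) = (1 - 1/q^Suc n) * qpoch (1/q^n) q j"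
      by (rule qpoch_shift) (use nz in simp)
    then show ?thesis unfolding P1_def N_def by (simp add: mult.commute)
  qed
  have r2: "qpoch A q (Suc j) = (1-A) * PA" unfolding PA_def by (rule qpoch_shift) simp
  have r3: "qpoch B q (Suc j) = (1-B) * PB" unfolding PB_def by (rule qpoch_shift) simp
  have r4: "qpoch q q (Suc j) = Pq * X1" unfolding Pq_def X1_def x_def by (simp add: qpoch_Suc)
  have r5: "qpoch C q (Suc j) = PC * X2" unfolding PC_def X2_def x_def using nz by (simp add: qpoch_Suc)
  have r6: "qpoch (q*A*B/(C*q^Suc n)) q (Suc j) = Y * PD"
    unfolding uD Y_def PD_def by (rule qpoch_shift[OF uD2])
  have r7: "qpoch (1/q^n) q (Suc j) = P1 * Z" unfolding P1_def Z_def x_def N_def using nz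
    by (simp add: qpoch_Suc)
  have r8: "qpoch (A*q) q (Suc j) = PA * (1 - A*x)" unfolding PA_def x_def by (simp add: qpoch_Suc mult.assoc)
  have r9: "qpoch (B*q) q (Suc j) = PB * (1 - B*x)" unfolding PB_def x_def by (simp add: qpoch_Suc mult.assoc)
  have r10: "qpoch (q*A*B/(C*q^n)) q (Suc j) = PD * X3" unfolding PD_def X3_def x_def N_def using nz
    by (simp add: qpoch_Suc field_simps)
  define \<Phi> where "\<Phi> = P1*PA*PB/(Pq*PC*PD*X1*X2*X3)"
  have T1: "Tm q A B C (Suc n) (Suc j) = \<Phi> * ((1-1/(N*q))*(1-A)*(1-B)*x*X3/Y)"
    unfolding Tm_def r1 r2 r3 r4 r5 r6 \<Phi>_def x_def[symmetric]
    using Pq0 PC0 PD0 X10 X20 X30 Y0 by (simp add: field_simps)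
  have T2: "Tm q A B C n (Suc j) = \<Phi> * (Z*(1-A)*(1-B)*x)"
    unfolding Tm_def r2 r3 r4 r5 r7 r10 \<Phi>_def x_def[symmetric]
    using Pq0 PC0 PD0 X10 X20 X30 Y0 by (simp add: field_simps)
  have U1: "Um q A B C n (Suc j) = \<Phi> * (Z*(1-A*x)*(1-B*x))"
    unfolding Um_def r4 r5 r7 r8 r9 r10 \<Phi>_def
    using Pq0 PC0 PD0 X10 X20 X30 Y0 by (simp add: field_simps)
  have U0: "Um q A B C n j = \<Phi> * (X1*X2*X3)"
    unfolding Um_def \<Phi>_def P1_def[symmetric] PA_def[symmetric] PB_def[symmetric] Pq_def[symmetric]
      PC_def[symmetric] PD_def[symmetric]
    using Pq0 PC0 PD0 X10 X20 X30 Y0 by (simp add: field_simps)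
  have K: "(1-1/(N*q))*(1-A)*(1-B)*x*X3/Y = rho q A B C n * (Z*(1-A)*(1-B)*x)
      + (1 - rho q A B C n) * (Z*(1-A*x)*(1-B*x) - X1*X2*X3)"
    unfolding rho_def N_def[symmetric] X1_def X2_def X3_def Y_def Z_def
    by (rule core[OF nz(1-4) N0 _ c1 c2]) (use Y0 Y_def in simp)
  show ?thesis unfolding T1 T2 U1 U0 K by (simp add: algebra_simps)
qed

lemma core2:
  fixes q A B C N :: complex
  assumes "q \<noteq> 0" "A \<noteq> 0" "B \<noteq> 0" "C \<noteq> 0" "N \<noteq> 0"
    "1 - A*B/(C*N) \<noteq> 0" "1 - C*N \<noteq> 0" "1 - C*N/(A*B) \<noteq> 0"
  shows "(1-A)*(1-B) = (1-((1 - C*N/A)*(1 - C*N/B)/((1 - C*N)*(1 - C*N/(A*B)))))*(1-C*N)*(1-A*B/(C*N))"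
proof -
  define d1 where "d1 = 1 - C*N"
  define d2 where "d2 = A*B - C*N"
  have h1: "d2 \<noteq> 0"
  proof
    assume "d2 = 0" then have "C*N/(A*B) = 1" using assms unfolding d2_def by simp
    then show False using assms(8) by simp
  qed
  have h2: "d1 \<noteq> 0" using assms(7) d1_def by simp
  have e1: "1 - A*B/(C*N) = -d2/(C*N)" using assms unfolding d2_def by (simp add: field_simps)
  have a: "1 - C*N/A = (A - C*N)/A" using assms by (simp add: field_simps)
  have b: "1 - C*N/B = (B - C*N)/B" using assms by (simp add: field_simps)
  have c: "1 - C*N/(A*B) = d2/(A*B)" using assms unfolding d2_def by (simp add: field_simps)
  have g: "\<And>u v d w::complex. (u/A)*(v/B)/(d*(w/(A*B))) = u*v/(d*w)" using assms by (simp add: field_simps)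
  have e2: "(1 - C*N/A)*(1 - C*N/B)/((1 - C*N)*(1 - C*N/(A*B))) = (A-C*N)*(B-C*N)/(d1*d2)"
    unfolding a b c g d1_def ..
  have e3: "1 - (A-C*N)*(B-C*N)/(d1*d2) = (d1*d2-(A-C*N)*(B-C*N))/(d1*d2)"
    using h1 h2 by (simp add: field_simps)
  show ?thesis unfolding e1 e2 e3 d1_def[symmetric] using h1 h2 assms
    apply (simp add: field_simps)
    apply (unfold d1_def d2_def)
    by algebra
qed

lemma step_last:
  fixes q A B C :: complex and n :: nat
  assumes nz: "q \<noteq> 0" "A \<noteq> 0" "B \<noteq> 0" "C \<noteq> 0"
    and hq: "qpoch q q (Suc n) \<noteq> 0" and hC: "qpoch C q (Suc n) \<noteq> 0"
    and hD: "qpoch (q*A*B/(C*q^Suc n)) q (Suc n) \<noteq> 0"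
    and hE: "qpoch (C/(A*B)) q (Suc n) \<noteq> 0"
  shows "Tm q A B C (Suc n) (Suc n) = rho q A B C n * Tm q A B C n (Suc n)
           + (1 - rho q A B C n) * (Um q A B C n (Suc n) - Um q A B C n n)"
proof -
  define N where "N = q^n"
  have N0: "N \<noteq> 0" using nz unfolding N_def by simp
  define P1 where "P1 = qpoch (1/q^n) q n"
  define PA where "PA = qpoch (A*q) q n"
  define PB where "PB = qpoch (B*q) q n"
  define Pq where "Pq = qpoch q q n"
  define PC where "PC = qpoch C q n"
  define PD where "PD = qpoch (q*A*B/(C*q^n)) q n"
  define X1 where "X1 = 1 - N*q"
  define X2 where "X2 = 1 - C*N"
  define Y where "Y = 1 - A*B/(C*N)"
  have uD: "q*A*B/(C*q^Suc n) = A*B/(C*N)" using nz unfolding N_def by (simp add: field_simps)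
  have uD2: "q*A*B/(C*q^n) = A*B/(C*N) * q" using nz unfolding N_def by (simp add: field_simps)
  have hD2: "qpoch (q*A*B/(C*q^Suc n)) q (Suc n) = Y * PD"
    unfolding uD Y_def PD_def by (rule qpoch_shift[OF uD2])
  have Y0: "Y \<noteq> 0" and PD0: "PD \<noteq> 0" using hD unfolding hD2 by auto
  have Pq0: "Pq \<noteq> 0" unfolding Pq_def using qpoch_nz_mono[OF hq] by simp
  have PC0: "PC \<noteq> 0" unfolding PC_def using qpoch_nz_mono[OF hC] by simp
  have X10: "X1 \<noteq> 0" using hq unfolding qpoch_nz_iff X1_def N_def by (auto simp: mult.commute)
  have X20: "X2 \<noteq> 0" using hC unfolding qpoch_nz_iff X2_def N_def by auto
  have c2: "1 - C*N/(A*B) \<noteq> 0" using hE unfolding qpoch_nz_iff N_def by auto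
  have z1: "qpoch (1/q^n) q (Suc n) = 0" using nz by (simp add: qpoch_Suc)
  have r1: "qpoch (1/q^Suc n) q (Suc n) = (1 - 1/(N*q)) * P1"
  proof -
    have "qpoch (1/q^Suc n) q (Suc n) = (1 - 1/q^Suc n) * qpoch (1/q^n) q n"
      by (rule qpoch_shift) (use nz in simp)
    then show ?thesis unfolding P1_def N_def by (simp add: mult.commute)
  qed
  have r2: "qpoch A q (Suc n) = (1-A) * PA" unfolding PA_def by (rule qpoch_shift) simp
  have r3: "qpoch B q (Suc n) = (1-B) * PB" unfolding PB_def by (rule qpoch_shift) simp
  have r4: "qpoch q q (Suc n) = Pq * X1" unfolding Pq_def X1_def N_def by (simp add: qpoch_Suc mult.commute)
  have r5: "qpoch C q (Suc n) = PC * X2" unfolding PC_def X2_def N_def using nz by (simp add: qpoch_Suc)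
  have T1: "Tm q A B C (Suc n) (Suc n) = P1*PA*PB/(Pq*PC*PD) * ((1-1/(N*q))*(1-A)*(1-B)*(N*q)/(X1*X2*Y))"
    unfolding Tm_def r1 r2 r3 r4 r5 hD2
    using Pq0 PC0 PD0 X10 X20 Y0 by (simp add: field_simps N_def)
  have T2: "Tm q A B C n (Suc n) = 0" unfolding Tm_def z1 by simp
  have U1: "Um q A B C n (Suc n) = 0" unfolding Um_def z1 by simp
  have U0: "Um q A B C n n = P1*PA*PB/(Pq*PC*PD)"
    unfolding Um_def P1_def PA_def PB_def Pq_def PC_def PD_def by simp
  have K0: "(1-A)*(1-B) = (1 - rho q A B C n)*X2*Y"
    unfolding rho_def N_def[symmetric] X2_def Y_def
    by (rule core2[OF nz(1-4) N0 _ _ c2]) (use Y0 Y_def X20 X2_def in simp_all)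
  have K: "(1-1/(N*q))*(1-A)*(1-B)*(N*q)/(X1*X2*Y) = -(1 - rho q A B C n)"
  proof -
    have a: "(1-1/(N*q))*(N*q) = -X1" unfolding X1_def using N0 nz by (simp add: field_simps)
    have "(1-1/(N*q))*(1-A)*(1-B)*(N*q) = ((1-1/(N*q))*(N*q))*((1-A)*(1-B))" by (simp add: ac_simps)
    also have "... = -(1 - rho q A B C n) * (X1*X2*Y)" unfolding a K0 by (simp add: algebra_simps)
    finally have b: "(1-1/(N*q))*(1-A)*(1-B)*(N*q) = -(1 - rho q A B C n) * (X1*X2*Y)" .
    have "X1*X2*Y \<noteq> 0" using X10 X20 Y0 by simp
    then show ?thesis unfolding b by simp
  qed
  have gen: "\<And>W r::complex. W * (-(1-r)) = r*0 + (1-r)*(0 - W)" by (simp add: algebra_simps)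
  show ?thesis unfolding T1 T2 U1 U0 K by (rule gen)
qed

definition Rhs :: "complex \<Rightarrow> complex \<Rightarrow> complex \<Rightarrow> complex \<Rightarrow> nat \<Rightarrow> complex" where
  "Rhs q A B C n = qpoch (C/A) q n * qpoch (C/B) q n / (qpoch C q n * qpoch (C/(A*B)) q n)"

lemma Tm0[simp]: "Tm q A B C n 0 = 1" by (simp add: Tm_def)
lemma Um0[simp]: "Um q A B C n 0 = 1" by (simp add: Um_def)

lemma Rhs_Suc:
  assumes nz: "q \<noteq> 0" "A \<noteq> 0" "B \<noteq> 0" "C \<noteq> 0"
    and hC: "qpoch C q (Suc n) \<noteq> 0" and hE: "qpoch (C/(A*B)) q (Suc n) \<noteq> 0"
  shows "Rhs q A B C (Suc n) = rho q A B C n * Rhs q A B C n"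
proof -
  have g: "\<And>a a' b b' u v x y::complex. b\<noteq>0 \<Longrightarrow> b'\<noteq>0 \<Longrightarrow> x\<noteq>0 \<Longrightarrow> y\<noteq>0 \<Longrightarrow>
     (a*u)*(a'*v)/((b*x)*(b'*y)) = (u*v/(x*y))*(a*a'/(b*b'))" by (simp add: field_simps)
  have b: "qpoch C q n \<noteq> 0" using qpoch_nz_mono[OF hC] by simp
  have b': "qpoch (C/(A*B)) q n \<noteq> 0" using qpoch_nz_mono[OF hE] by simp
  have x: "1 - C*q^n \<noteq> 0" using hC unfolding qpoch_nz_iff by auto
  have y: "1 - C/(A*B)*q^n \<noteq> 0" using hE unfolding qpoch_nz_iff by auto
  have "Rhs q A B C (Suc n) = ((1 - C/A*q^n)*(1 - C/B*q^n)/((1 - C*q^n)*(1 - C/(A*B)*q^n))) * Rhs q A B C n"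
    unfolding Rhs_def qpoch_Suc by (rule g[OF b b' x y])
  also have "(1 - C/A*q^n)*(1 - C/B*q^n)/((1 - C*q^n)*(1 - C/(A*B)*q^n)) = rho q A B C n"
    unfolding rho_def by simp
  finally show ?thesis .
qed

lemma saal_ind:
  fixes q A B C :: complex
  assumes nz: "q \<noteq> 0" "A \<noteq> 0" "B \<noteq> 0" "C \<noteq> 0"
  shows "qpoch q q n \<noteq> 0 \<Longrightarrow> qpoch C q n \<noteq> 0 \<Longrightarrow> qpoch (q*A*B/(C*q^n)) q n \<noteq> 0
     \<Longrightarrow> qpoch (C/(A*B)) q n \<noteq> 0 \<Longrightarrow> (\<Sum>k<Suc n. Tm q A B C n k) = Rhs q A B C n"
proof (induction n)
  case 0 then show ?case by (simp add: Rhs_def)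
next
  case (Suc n)
  note hq = Suc.prems(1) and hC = Suc.prems(2) and hD = Suc.prems(3) and hE = Suc.prems(4)
  have uD: "q*A*B/(C*q^Suc n) = A*B/(C*q^n)" using nz by (simp add: field_simps)
  have uD2: "q*A*B/(C*q^n) = A*B/(C*q^n) * q" using nz by (simp add: field_simps)
  have hD2: "qpoch (q*A*B/(C*q^Suc n)) q (Suc n) = (1 - A*B/(C*q^n)) * qpoch (q*A*B/(C*q^n)) q n"
    unfolding uD by (rule qpoch_shift[OF uD2])
  have hD': "qpoch (q*A*B/(C*q^n)) q n \<noteq> 0" using hD unfolding hD2 by auto
  have IH: "(\<Sum>k<Suc n. Tm q A B C n k) = Rhs q A B C n"
    using Suc.IH qpoch_nz_mono[OF hq] qpoch_nz_mono[OF hC] hD' qpoch_nz_mono[OF hE] by simp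
  define r where "r = rho q A B C n"
  define V where "V k = (case k of 0 \<Rightarrow> 0 | Suc j \<Rightarrow> Um q A B C n j)" for k
  have per: "Tm q A B C (Suc n) k = r * Tm q A B C n k + (1 - r) * (V (Suc k) - V k)"
    if "k < Suc (Suc n)" for k
  proof (cases k)
    case 0 then show ?thesis by (simp add: V_def algebra_simps)
  next
    case (Suc j)
    show ?thesis
    proof (cases "j < n")
      case True then show ?thesis unfolding Suc V_def r_def
        using step_gen[OF nz True hq hC hD hE] by simp
    next
      case False then have "j = n" using that Suc by simp
      then show ?thesis unfolding Suc V_def r_def
        using step_last[OF nz hq hC hD hE] by simp
    qed
  qed
  have z1: "qpoch (1/q^n) q (Suc n) = 0" using nz by (simp add: qpoch_Suc)
  have T0: "Tm q A B C n (Suc n) = 0" unfolding Tm_def z1 by simp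
  have U0: "Um q A B C n (Suc n) = 0" unfolding Um_def z1 by simp
  have "(\<Sum>k<Suc (Suc n). Tm q A B C (Suc n) k)
      = (\<Sum>k<Suc (Suc n). r * Tm q A B C n k + (1 - r) * (V (Suc k) - V k))"
    using per by (rule sum.cong[OF refl]) simp
  also have "... = r * (\<Sum>k<Suc (Suc n). Tm q A B C n k) + (1 - r) * (\<Sum>k<Suc (Suc n). V (Suc k) - V k)"
    by (simp only: sum.distrib flip: sum_distrib_left)
  also have "(\<Sum>k<Suc (Suc n). V (Suc k) - V k) = 0"
    by (simp only: sum_lessThan_telescope) (simp add: V_def U0)
  also have "(\<Sum>k<Suc (Suc n). Tm q A B C n k) = Rhs q A B C n"
    using IH T0 by simp
  finally show ?case using Rhs_Suc[OF nz hC hE] r_def by simp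
qed
theorem mainTheorem3:
  fixes n :: nat and r w a :: complex
  assumes "r \<noteq> 0" and "w \<noteq> 0" and "a \<noteq> 0"
    and "qpoch (w * r ^ 4 / r ^ (4 * n)) (r ^ 2) n \<noteq> 0"
    and "qpoch (a * w * r ^ (2 * n) / r ^ 2) (r ^ 2) n \<noteq> 0"
    and "qpoch (r ^ 2) (r ^ 2) n \<noteq> 0"
    and "qpoch (r ^ 4 / (r ^ (4 * n) * w * a)) (r ^ 2) n \<noteq> 0"
  shows "qpoch (w * r ^ 3 / r ^ (2 * n)) (r ^ 2) n * qpoch (a * w / r) (r ^ 2) n
          / (qpoch (w * r ^ 4 / r ^ (4 * n)) (r ^ 2) n * qpoch (a * w * r ^ (2 * n) / r ^ 2) (r ^ 2) n)
       = (\<Sum>k=0..n.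
            qpoch (1 / r ^ (2 * n)) (r ^ 2) k * qpoch (r / r ^ (2 * n)) (r ^ 2) k
              * qpoch (r ^ 5 / (r ^ (4 * n) * a)) (r ^ 2) k
            / (qpoch (r ^ 2) (r ^ 2) k * qpoch (w * r ^ 4 / r ^ (4 * n)) (r ^ 2) k
              * qpoch (r ^ 4 / (r ^ (4 * n) * w * a)) (r ^ 2) k)
            * (r ^ 2) ^ k)"
proof -
  note nz0 = assms(1-3)
  define q where "q = r^2"
  define A where "A = r/r^(2*n)"
  define B where "B = r^5/(r^(4*n)*a)"
  define C where "C = w*r^4/r^(4*n)"
  have q0: "q \<noteq> 0" "A \<noteq> 0" "B \<noteq> 0" "C \<noteq> 0" using nz0 unfolding q_def A_def B_def C_def by auto
  have p2: "r^(2*n) = (r^n)^2" and p4: "r^(4*n) = (r^n)^4" by (simp_all add: power_mult mult.commute)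
  have qn: "q^n = r^(2*n)" unfolding q_def by (simp add: power_mult)
  have eD: "q*A*B/(C*q^n) = r^4/(r^(4*n)*w*a)"
    unfolding qn unfolding q_def A_def B_def C_def p2 p4 using nz0 by (simp add: field_simps) (simp add: eval_nat_numeral)
  have eCA: "C/A = w * r^3 / r^(2*n)"
    unfolding A_def C_def p2 p4 using nz0 by (simp add: field_simps) (simp add: eval_nat_numeral)
  have eCB: "C/B = a*w/r"
    unfolding B_def C_def p2 p4 using nz0 by (simp add: field_simps) (simp add: eval_nat_numeral)
  have eCAB: "C/(A*B) = a * w * r ^ (2 * n) / r ^ 2"
    unfolding A_def B_def C_def p2 p4 using nz0 by (simp add: field_simps) (simp add: eval_nat_numeral)
  have e1: "1/q^n = 1/r^(2*n)" unfolding qn ..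
  have S: "(\<Sum>k<Suc n. Tm q A B C n k) = Rhs q A B C n"
    by (rule saal_ind[OF q0]) (use assms in \<open>simp_all add: eD eCAB q_def[symmetric] C_def[symmetric]\<close>)
  have L: "(\<Sum>k<Suc n. Tm q A B C n k) = (\<Sum>k=0..n.
            qpoch (1 / r ^ (2 * n)) (r ^ 2) k * qpoch (r / r ^ (2 * n)) (r ^ 2) k
              * qpoch (r ^ 5 / (r ^ (4 * n) * a)) (r ^ 2) k
            / (qpoch (r ^ 2) (r ^ 2) k * qpoch (w * r ^ 4 / r ^ (4 * n)) (r ^ 2) k
              * qpoch (r ^ 4 / (r ^ (4 * n) * w * a)) (r ^ 2) k)
            * (r ^ 2) ^ k)"
    unfolding atLeast0AtMost lessThan_Suc_atMost[symmetric]
    by (rule sum.cong[OF refl]) (simp add: Tm_def eD e1 q_def[symmetric] A_def[symmetric] B_def[symmetric] C_def[symmetric])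
  have R: "Rhs q A B C n = qpoch (w * r ^ 3 / r ^ (2 * n)) (r ^ 2) n * qpoch (a * w / r) (r ^ 2) n
          / (qpoch (w * r ^ 4 / r ^ (4 * n)) (r ^ 2) n * qpoch (a * w * r ^ (2 * n) / r ^ 2) (r ^ 2) n)"
    unfolding Rhs_def eCA eCB eCAB unfolding q_def C_def ..
  show ?thesis using S L R by simp
qed

end
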